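(* Let $\mathcal D=(C_1,C_2,C_3,C_4)$ be any ordered, oriented Descartes configuration and fix $i\in\{1,2,3,4\}$. Let $C_i'$ be the unique circle (or line), different from $C_i$, that is tangent to the three circles $C_j$, $j\neq i$, at points distinct from their mutual tangency points, and orient it so that the configuration $\mathcal D'$ obtained from $\mathcal D$ by replacing $C_i$ with $C_i'$ (keeping the other three oriented circles) is an oriented Descartes configuration. Then $\mathbf W_{\mathcal D'}=\mathbf S_i\mathbf W_{\mathcal D}$, where $\mathbf S_i$ is the $4\times4$ matrix that agrees with the identity except in row $i$, whose entries are $-1$ in position $i$ and $2$ in the other three positions. (Equivalently, $\mathcal D'$ is the image of $\mathcal D$ under inversion in the circle through the three tangency points of $\mathcal D$ not lying on $C_i$.)
   Context: Oriented circles: radius $r$, oriented curvature $\pm1/r$, $+$ iff the interior is the bounded open disk; oriented lines have curvature $0$, unit normal $\mathbf h$, interior the open half-plane into which $\mathbf h$ points. A Descartes configuration: four mutually tangent circles/lines with six distinct tangency points (parallel lines tangent at $\infty$); oriented if the four interiors are pairwise disjoint or become so after reversing all orientations. Augmented curvature-center coordinates: for center $\mathbf c$ and oriented radius $r$, $\mathbf w(C)=((|\mathbf c|^2-r^2)/r,1/r,c_1/r,c_2/r)$; for the line $\mathbf x\cdot\mathbf h=m$ with interior-pointing unit normal $\mathbf h$, $\mathbf w(C)=(2m,0,h_1,h_2)$. $\mathbf W_{\mathcal D}$ is the $4\times4$ matrix with $i$-th row $\mathbf w(C_i)$. *)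

theory Defs
  imports "HOL-Analysis.Analysis"
begin

text \<open>Circ c r: circle with center c and oriented radius r (r \<noteq> 0);
     r > 0 iff the interior is the bounded open disk.
  OLine h m: the line {x. h \<bullet> x = m} with unit normal h (norm h = 1);
     interior is the open half-plane into which h points.\<close>

datatype ocircle = Circ "real^2" real | OLine "real^2" real

fun wf_oc :: "ocircle \<Rightarrow> bool" where
  "wf_oc (Circ c r) = (r \<noteq> 0)"
| "wf_oc (OLine h m) = (norm h = 1)"

fun pts :: "ocircle \<Rightarrow> (real^2) set" where
  "pts (Circ c r) = sphere c \<bar>r\<bar>"
| "pts (OLine h m) = {x. h \<bullet> x = m}"

fun intr :: "ocircle \<Rightarrow> (real^2) set" where
  "intr (Circ c r) = (if r > 0 then ball c r else - cball c (- r))"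
| "intr (OLine h m) = {x. h \<bullet> x > m}"

fun reverse_oc :: "ocircle \<Rightarrow> ocircle" where
  "reverse_oc (Circ c r) = Circ c (- r)"
| "reverse_oc (OLine h m) = OLine (- h) (- m)"

text \<open>Tangency: a circle is tangent to a circle or line iff they meet in exactly
  one point; two lines are tangent (at infinity) iff they are parallel and distinct.\<close>
fun tangent :: "ocircle \<Rightarrow> ocircle \<Rightarrow> bool" where
  "tangent (OLine h m) (OLine h' m') =
     ((h' = h \<or> h' = - h) \<and> pts (OLine h m) \<inter> pts (OLine h' m') = {})"
| "tangent C D = (\<exists>!p. p \<in> pts C \<inter> pts D)"

text \<open>Tangency point in the extended plane; None stands for the point at infinity.\<close>
fun tpt :: "ocircle \<Rightarrow> ocircle \<Rightarrow> (real^2) option" where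
  "tpt (OLine h m) (OLine h' m') = None"
| "tpt C D = Some (THE p. p \<in> pts C \<inter> pts D)"

definition descartes :: "(4 \<Rightarrow> ocircle) \<Rightarrow> bool" where
  "descartes D \<longleftrightarrow>
     (\<forall>i. wf_oc (D i)) \<and>
     (\<forall>i j. i \<noteq> j \<longrightarrow> tangent (D i) (D j)) \<and>
     (\<forall>i j k l. i \<noteq> j \<and> k \<noteq> l \<and> tpt (D i) (D j) = tpt (D k) (D l)
                \<longrightarrow> {i, j} = {k, l})"

definition oriented_descartes :: "(4 \<Rightarrow> ocircle) \<Rightarrow> bool" where
  "oriented_descartes D \<longleftrightarrow> descartes D \<and>
     ((\<forall>i j. i \<noteq> j \<longrightarrow> intr (D i) \<inter> intr (D j) = {}) \<or>
      (\<forall>i j. i \<noteq> j \<longrightarrow> intr (reverse_oc (D i)) \<inter> intr (reverse_oc (D j)) = {}))"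

fun acc :: "ocircle \<Rightarrow> real^4" where
  "acc (Circ c r) = vector [(c \<bullet> c - r\<^sup>2) / r, 1 / r, c$1 / r, c$2 / r]"
| "acc (OLine h m) = vector [2 * m, 0, h$1, h$2]"

definition W_mat :: "(4 \<Rightarrow> ocircle) \<Rightarrow> real^4^4" where
  "W_mat D = (\<chi> k. acc (D k))"

definition S_mat :: "4 \<Rightarrow> real^4^4" where
  "S_mat i = (\<chi> j k. if j = i then (if k = i then -1 else 2)
                     else (if j = k then 1 else 0))"

end

theory Submission
  imports Defs
begin

definition bil :: "real^4 \<Rightarrow> real^4 \<Rightarrow> real" where
  "bil u v = u$3 * v$3 + u$4 * v$4 - (u$1 * v$2 + u$2 * v$1)/2"
lemma vec4: "(vector [a,b,c,d] :: real^4) $ 1 = a" "(vector [a,b,c,d] :: real^4) $ 2 = b"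
  "(vector [a,b,c,d] :: real^4) $ 3 = c" "(vector [a,b,c,d] :: real^4) $ 4 = d"
  by (simp_all add: vector_def)
lemma inner2: "(x::real^2) \<bullet> y = x$1*y$1 + x$2*y$2"
  by (simp add: inner_vec_def sum_2)
lemma bil_cc: assumes "r \<noteq> 0" "r' \<noteq> 0"
  shows "bil (acc (Circ c r)) (acc (Circ c' r')) = (r^2 + r'^2 - (dist c c')^2)/(2*r*r')"
proof -
  have d: "(dist c c')^2 = c\<bullet>c - 2*(c\<bullet>c') + c'\<bullet>c'"
    by (simp add: dist_norm power2_norm_eq_inner inner_diff_left inner_diff_right inner_commute)
  show ?thesis using assms unfolding d bil_def by (simp add: vec4 inner2 field_simps)
qed
lemma bil_cl: assumes "r \<noteq> 0"
  shows "bil (acc (Circ c r)) (acc (OLine h m)) = (h \<bullet> c - m)/r"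
  using assms unfolding bil_def by (simp add: vec4 inner2 field_simps)
lemma bil_lc: assumes "r \<noteq> 0"
  shows "bil (acc (OLine h m)) (acc (Circ c r)) = (h \<bullet> c - m)/r"
  using assms unfolding bil_def by (simp add: vec4 inner2 field_simps)
lemma bil_ll: "bil (acc (OLine h m)) (acc (OLine h' m')) = h \<bullet> h'"
  unfolding bil_def by (simp add: vec4 inner2)
lemma bil_self: "wf_oc C \<Longrightarrow> bil (acc C) (acc C) = 1"
  apply (cases C)
   apply (simp add: bil_def vec4 inner2 field_simps power2_eq_square)
  apply (simp add: bil_def vec4)
  by (metis inner2 norm_eq_1 power2_eq_square)

lemma cc_pos: fixes c c' :: "real^2"
  assumes "r > 0" "r' > 0" "dist c p = r" "dist c' p = r'" "ball c r \<inter> ball c' r' = {}"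
  shows "dist c c' = r + r'"
proof (rule ccontr)
  assume ne: "dist c c' \<noteq> r + r'"
  have "dist c c' \<le> r + r'" using assms(3,4) dist_triangle[of c c' p] by (simp add: dist_commute)
  hence lt: "dist c c' < r + r'" using ne by simp
  define x where "x = c + (r/(r+r')) *\<^sub>R (c' - c)"
  have "dist c x = (r/(r+r')) * dist c c'" using assms(1,2)
    by (simp add: x_def dist_norm dist_commute norm_minus_commute)
  also have "\<dots> < r" using mult_strict_left_mono[OF lt, of "r/(r+r')"] assms(1,2) by simp
  finally have 1: "x \<in> ball c r" by simp
  have "c' - x = (1 - r/(r+r')) *\<^sub>R (c' - c)" by (simp add: x_def algebra_simps)
  moreover have "1 - r/(r+r') = r'/(r+r')" using assms(1,2) by (simp add: field_simps)
  ultimately have "c' - x = (r'/(r+r')) *\<^sub>R (c' - c)" by simp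
  hence "dist c' x = (r'/(r+r')) * dist c c'" using assms(1,2)
    by (simp add: dist_norm norm_minus_commute)
  also have "\<dots> < r'" using mult_strict_left_mono[OF lt, of "r'/(r+r')"] assms(1,2) by simp
  finally have 2: "x \<in> ball c' r'" by simp
  show False using 1 2 assms(5) by blast
qed

lemma cc_mixed: fixes c c' :: "real^2"
  assumes "r > 0" "s > 0" "dist c p = r" "dist c' p = s" "ball c r \<inter> - cball c' s = {}"
  shows "dist c c' = s - r"
proof -
  have "ball c r \<subseteq> cball c' s" using assms(5) by blast
  hence "dist c c' + r \<le> s \<or> r \<le> 0" using ball_subset_cball_iff[of c r c' s] by blast
  hence "dist c c' + r \<le> s" using assms(1) by simp
  moreover have "s \<le> dist c c' + r" using assms(3,4) dist_triangle[of c' p c] by (simp add: dist_commute)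
  ultimately show ?thesis by simp
qed

lemma cc_negneg: fixes c c' :: "real^2"
  assumes "- cball c s \<inter> - cball c' s' = {}" shows False
proof -
  have "cball c s \<union> cball c' s' = UNIV" using assms by blast
  moreover have "bounded (cball c s \<union> cball c' s')" by simp
  ultimately show False by simp
qed

lemma circ_circ: assumes "r \<noteq> 0" "r' \<noteq> 0" "tangent (Circ c r) (Circ c' r')"
  "intr (Circ c r) \<inter> intr (Circ c' r') = {}"
  shows "bil (acc (Circ c r)) (acc (Circ c' r')) = -1"
proof -
  obtain p where p: "dist c p = \<bar>r\<bar>" "dist c' p = \<bar>r'\<bar>" using assms(3) by auto
  have "(dist c c')\<^sup>2 = (r + r')\<^sup>2"
  proof (cases "r > 0")
    case True
    show ?thesis
    proof (cases "r' > 0")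
      case True2: True
      then show ?thesis using cc_pos[of r r' c p c'] p True assms(4) by auto
    next
      case False
      hence "r' < 0" using assms(2) by simp
      have "dist c c' = -r' - r" using cc_mixed[of r "-r'" c p c'] p True assms(4) \<open>r' < 0\<close> by auto
      then show ?thesis by (metis minus_diff_eq power2_minus add.commute diff_minus_eq_add)
    qed
  next
    case False
    hence r0: "r < 0" using assms(1) by simp
    show ?thesis
    proof (cases "r' > 0")
      case True2: True
      have "dist c' c = -r - r'" using cc_mixed[of r' "-r" c' p c] p r0 True2 assms(4)
        by (auto simp: Int_commute)
      then show ?thesis by (metis dist_commute minus_diff_eq power2_minus add.commute diff_minus_eq_add)
    next
      case False
      hence "r' < 0" using assms(2) by simp
      then show ?thesis using cc_negneg[of c "-r" c' "-r'"] r0 assms(4) by auto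
    qed
  qed
  then show ?thesis unfolding bil_cc[OF assms(1,2)] using assms(1,2)
    by (simp add: field_simps power2_eq_square algebra_simps)
qed

lemma circ_line: assumes "r \<noteq> 0" "norm h = 1" "\<exists>p. p \<in> pts (Circ c r) \<inter> pts (OLine h m)"
  "intr (Circ c r) \<inter> intr (OLine h m) = {}"
  shows "bil (acc (Circ c r)) (acc (OLine h m)) = -1"
proof -
  obtain p where p: "dist c p = \<bar>r\<bar>" "h \<bullet> p = m" using assms(3) by auto
  have cs: "\<bar>h \<bullet> (p - c)\<bar> \<le> \<bar>r\<bar>"
    using Cauchy_Schwarz_ineq2[of h "p - c"] assms(2) p(1) by (simp add: dist_norm norm_minus_commute)
  show ?thesis
  proof (cases "r > 0")
    case True
    have "h \<bullet> c = m - r"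
    proof (rule ccontr)
      assume "h \<bullet> c \<noteq> m - r"
      hence gt: "h \<bullet> c > m - r" using cs p True by (simp add: inner_diff_right)
      define t where "t = (r + m - h \<bullet> c)/2"
      have t0: "t \<ge> 0" "t < r" using gt cs p True by (auto simp: t_def inner_diff_right)
      define x where "x = c + t *\<^sub>R h"
      have "dist c x = t" using t0 assms(2) by (simp add: x_def dist_norm)
      hence 1: "x \<in> ball c r" using t0 by simp
      have "h \<bullet> x = h \<bullet> c + t" using assms(2) by (simp add: x_def inner_add_right dot_square_norm)
      hence 2: "h \<bullet> x > m" using gt by (simp add: t_def field_simps)
      show False using 1 2 assms(4) True by auto
    qed
    then show ?thesis using True by (simp only: bil_cl[OF assms(1)]) simp
  next
    case False
    hence r0: "r < 0" using assms(1) by simp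
    define t where "t = - r + 1 + \<bar>m - h \<bullet> c\<bar>"
    define x where "x = c + t *\<^sub>R h"
    have "dist c x = t" using assms(2) r0 by (simp add: x_def dist_norm t_def)
    hence 1: "x \<notin> cball c (-r)" by (simp add: t_def)
    have "h \<bullet> x = h \<bullet> c + t" using assms(2) by (simp add: x_def inner_add_right dot_square_norm)
    hence 2: "h \<bullet> x > m" using r0 by (simp add: t_def)
    show ?thesis using 1 2 assms(4) r0 by auto
  qed
qed

lemma line_line: assumes "norm h = 1" "h' = h \<or> h' = - h"
  "intr (OLine h m) \<inter> intr (OLine h' m') = {}"
  shows "bil (acc (OLine h m)) (acc (OLine h' m')) = -1"
proof -
  have "h' \<noteq> h"
  proof
    assume e: "h' = h"
    define x where "x = (max m m' + 1) *\<^sub>R h"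
    have "h \<bullet> x = max m m' + 1" using assms(1) by (simp add: x_def dot_square_norm)
    hence "x \<in> intr (OLine h m) \<inter> intr (OLine h' m')" using e by auto
    then show False using assms(3) by blast
  qed
  hence "h' = - h" using assms(2) by simp
  then show ?thesis using assms(1) by (simp only: bil_ll) (simp add: dot_square_norm)
qed

lemma bil_sym: "bil u v = bil v u" unfolding bil_def by (simp add: algebra_simps)

lemma pair_neg: assumes "wf_oc C" "wf_oc D" "tangent C D" "intr C \<inter> intr D = {}"
  shows "bil (acc C) (acc D) = -1"
proof (cases C)
  case (Circ c r)
  then show ?thesis
  proof (cases D)
    case (Circ c' r')
    then show ?thesis using circ_circ assms \<open>C = _\<close> by auto
  next
    case (OLine h m)
    then show ?thesis using circ_line[of r h c m] assms \<open>C = _\<close> by auto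
  qed
next
  case (OLine h m)
  then show ?thesis
  proof (cases D)
    case (Circ c' r')
    then show ?thesis using circ_line[of r' h c' m] assms \<open>C = _\<close> bil_sym
      by (auto simp: Int_commute)
  next
    case (OLine h' m')
    then show ?thesis using line_line[of h h' m m'] assms \<open>C = _\<close> by auto
  qed
qed

lemma acc_rev: "acc (reverse_oc C) = - acc C"
  by (cases C) (simp_all add: vec_eq_iff forall_4 vec4 field_simps)

lemma bil_neg: "bil (- u) (- v) = bil u v" unfolding bil_def by simp

lemma pts_rev: "pts (reverse_oc C) = pts C"
  by (cases C) auto

lemma wf_rev: "wf_oc (reverse_oc C) = wf_oc C"
  by (cases C) auto

lemma tangent_rev: "tangent C D \<Longrightarrow> tangent (reverse_oc C) (reverse_oc D)"
proof (cases C)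
  case (Circ c r)
  then show "tangent C D \<Longrightarrow> ?thesis" by (cases D) auto
next
  case (OLine h m)
  then show "tangent C D \<Longrightarrow> ?thesis" by (cases D) (auto simp: minus_equation_iff)
qed

lemma od_bil: assumes "oriented_descartes D" "a \<noteq> b"
  shows "bil (acc (D a)) (acc (D b)) = -1"
proof -
  have wf: "wf_oc (D a)" "wf_oc (D b)" and t: "tangent (D a) (D b)"
    using assms unfolding oriented_descartes_def descartes_def by auto
  have "intr (D a) \<inter> intr (D b) = {} \<or>
        intr (reverse_oc (D a)) \<inter> intr (reverse_oc (D b)) = {}"
    using assms unfolding oriented_descartes_def by auto
  then show ?thesis
  proof
    assume "intr (D a) \<inter> intr (D b) = {}"
    then show ?thesis using pair_neg wf t by blast
  next
    assume "intr (reverse_oc (D a)) \<inter> intr (reverse_oc (D b)) = {}"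
    then have "bil (acc (reverse_oc (D a))) (acc (reverse_oc (D b))) = -1"
      using pair_neg wf t tangent_rev wf_rev by blast
    then show ?thesis by (simp add: acc_rev bil_neg)
  qed
qed

lemma acc_inj: assumes "wf_oc C" "wf_oc D" "acc C = acc D" shows "C = D"
proof (cases C)
  case (Circ c r)
  then show ?thesis
  proof (cases D)
    case (Circ c' r')
    have "1/r = 1/r'" "c$1/r = c'$1/r'" "c$2/r = c'$2/r'"
      using arg_cong[OF assms(3), of "\<lambda>v. v$2"] arg_cong[OF assms(3), of "\<lambda>v. v$3"]
        arg_cong[OF assms(3), of "\<lambda>v. v$4"] \<open>C = _\<close> Circ by (simp_all add: vec4)
    then have "r = r'" "c$1 = c'$1" "c$2 = c'$2" using assms(1,2) \<open>C = _\<close> Circ by auto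
    then have "c = c'" by (simp add: vec_eq_iff forall_2)
    then show ?thesis using \<open>r = r'\<close> \<open>C = _\<close> Circ by simp
  next
    case (OLine h m)
    then show ?thesis using arg_cong[OF assms(3), of "\<lambda>v. v$2"] assms(1) \<open>C = _\<close> by (simp add: vec4)
  qed
next
  case (OLine h m)
  then show ?thesis
  proof (cases D)
    case (Circ c' r')
    then show ?thesis using arg_cong[OF assms(3), of "\<lambda>v. v$2"] assms(2) \<open>C = _\<close> by (simp add: vec4)
  next
    case (OLine h' m')
    have "m = m'" "h$1 = h'$1" "h$2 = h'$2"
      using arg_cong[OF assms(3), of "\<lambda>v. v$1"] arg_cong[OF assms(3), of "\<lambda>v. v$3"]
        arg_cong[OF assms(3), of "\<lambda>v. v$4"] \<open>C = _\<close> OLine by (simp_all add: vec4)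
    then have "h = h'" by (simp add: vec_eq_iff forall_2)
    then show ?thesis using \<open>m = m'\<close> \<open>C = _\<close> OLine by simp
  qed
qed

lemma spanning: fixes w :: "4 \<Rightarrow> real^4"
  assumes G: "\<And>a b. bil (w a) (w b) = (if a = b then 1 else -1)"
  shows "\<exists>a::real^4. v = (\<Sum>m\<in>UNIV. a$m *\<^sub>R w m)"
proof -
  define Wm :: "real^4^4" where "Wm = (\<chi> a. w a)"
  define Qm :: "real^4^4" where "Qm = (\<chi> k l. if (k=1 \<and> l=2) \<or> (k=2 \<and> l=1) then -1/2
       else if k = l \<and> (k = 3 \<or> k = 4) then 1 else 0)"
  define Gm :: "real^4^4" where "Gm = (\<chi> a b. if a = b then 1 else -1)"
  define Gi :: "real^4^4" where "Gi = (\<chi> a b. if a = b then 1/4 else -1/4)"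
  have "(Wm ** Qm ** transpose Wm) $ a $ b = bil (w a) (w b)" for a b
    by (simp add: Wm_def Qm_def matrix_matrix_mult_def transpose_def sum_4 bil_def algebra_simps)
  hence WQ: "Wm ** Qm ** transpose Wm = Gm" using G by (simp add: vec_eq_iff Gm_def)
  have GG: "Gm ** Gi = mat 1"
    by (simp add: Gm_def Gi_def matrix_matrix_mult_def vec_eq_iff forall_4 sum_4 mat_def)
  have "Wm ** (Qm ** transpose Wm ** Gi) = mat 1"
    using WQ GG by (simp add: matrix_mul_assoc)
  then obtain B where B: "B ** Wm = mat 1" using matrix_left_right_inverse by blast
  define a where "a = transpose B *v v"
  have "transpose Wm *v a = v"
    by (simp add: a_def vector_matrix_mul_assoc B)
  moreover have "transpose Wm *v a = (\<Sum>m\<in>UNIV. a$m *\<^sub>R w m)"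
    by (simp add: vec_eq_iff matrix_vector_mult_def transpose_def sum_component Wm_def mult.commute)
  ultimately show ?thesis by metis
qed

lemma bil_add_left: "bil (x + y) u = bil x u + bil y u" unfolding bil_def by (simp add: field_simps)
lemma bil_zero_left: "bil 0 u = 0" unfolding bil_def by simp
lemma bil_scale_left: "bil (c *\<^sub>R x) u = c * bil x u" unfolding bil_def by (simp add: algebra_simps)
lemma bil_sum_left: "finite S \<Longrightarrow> bil (\<Sum>m\<in>S. f m) u = (\<Sum>m\<in>S. bil (f m) u)"
  by (induction S rule: finite_induct) (simp_all add: bil_add_left bil_zero_left)

lemma lin: fixes w :: "4 \<Rightarrow> real^4" and v :: "real^4"
  assumes G: "\<And>a b. bil (w a) (w b) = (if a = b then 1 else -1)"
    and vv: "bil v v = 1" and vj: "\<And>j. j \<noteq> i \<Longrightarrow> bil v (w j) = -1" and ne: "v \<noteq> w i"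
  shows "v = (\<Sum>m\<in>UNIV. (if m = i then -1 else 2) *\<^sub>R w m)"
proof -
  obtain a where v: "v = (\<Sum>m\<in>UNIV. a$m *\<^sub>R w m)" using spanning G by blast
  define s where "s = (\<Sum>m\<in>UNIV. a$m)"
  have L: "bil v u = (\<Sum>m\<in>UNIV. a$m * bil (w m) u)" for u
    unfolding v by (simp add: bil_sum_left bil_scale_left)
  have bj: "bil v (w j) = 2 * a$j - s" for j
  proof -
    have "bil v (w j) = (\<Sum>m\<in>UNIV. 2 * (if m = j then a$m else 0) - a$m)"
      unfolding L G by (rule sum.cong) auto
    also have "\<dots> = 2 * a$j - s"
      by (simp add: sum_subtractf sum_distrib_left[symmetric] s_def)
    finally show ?thesis .
  qed
  define c where "c = (s - 1)/2"
  have aj: "a$j = c" if "j \<noteq> i" for j using bj[of j] vj[OF that] by (simp add: c_def)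
  have card3: "card (UNIV - {i}) = 3" by (simp add: card_Diff_singleton)
  have "s = a$i + (\<Sum>m\<in>UNIV-{i}. a$m)" unfolding s_def by (simp add: sum.remove)
  also have "(\<Sum>m\<in>UNIV-{i}. a$m) = (\<Sum>m\<in>UNIV-{i}. c)" by (rule sum.cong) (auto simp: aj)
  finally have s_eq: "s = a$i + 3 * c" using card3 by simp
  have "1 = (\<Sum>m\<in>UNIV. a$m * (2 * a$m - s))"
    using vv unfolding L by (simp add: bil_sym[of "w _" v] bj)
  also have "\<dots> = a$i * (2 * a$i - s) + (\<Sum>m\<in>UNIV-{i}. a$m * (2 * a$m - s))"
    by (simp add: sum.remove)
  also have "(\<Sum>m\<in>UNIV-{i}. a$m * (2 * a$m - s)) = (\<Sum>m\<in>UNIV-{i}. c * (2 * c - s))"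
    by (rule sum.cong) (auto simp: aj)
  finally have q: "1 = a$i * (2 * a$i - s) + 3 * (c * (2 * c - s))" using card3 by simp
  have ai: "a$i = (3 - s)/2" using s_eq unfolding c_def by (simp add: field_simps)
  have "1 = (3 - s)/2 * (2 * ((3 - s)/2) - s) + 3 * ((s - 1)/2 * (2 * ((s - 1)/2) - s))"
    using q unfolding ai c_def .
  hence "(s - 1) * (s - 5) = 0" by (simp add: field_simps algebra_simps)
  hence "s = 1 \<or> s = 5" by simp
  then show ?thesis
  proof
    assume "s = 1"
    have c0: "c = 0" unfolding c_def using \<open>s = 1\<close> by simp
    have h1: "a$i = 1" "c = 0" using s_eq \<open>s = 1\<close> c0 by linarith+
    have am: "a$m = (if m = i then 1 else 0)" for m using aj[of m] h1 by (cases "m = i") simp_all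
    have "v = (\<Sum>m\<in>UNIV. (if m = i then w m else 0))" unfolding v by (intro sum.cong) (simp_all add: am)
    hence "v = w i" by simp
    with ne show ?thesis by simp
  next
    assume "s = 5"
    have c0: "c = 2" unfolding c_def using \<open>s = 5\<close> by simp
    have h1: "a$i = -1" "c = 2" using s_eq \<open>s = 5\<close> c0 by linarith+
    have am: "a$m = (if m = i then -1 else 2)" for m using aj[of m] h1 by (cases "m = i") simp_all
    show ?thesis unfolding v by (intro sum.cong) (simp_all add: am)
  qed
qed

theorem mainTheorem3:
  fixes D :: "4 \<Rightarrow> ocircle" and i :: 4 and C' :: ocircle
  assumes "oriented_descartes D"
    and "wf_oc C'"
    and "pts C' \<noteq> pts (D i)"
    and "\<forall>j. j \<noteq> i \<longrightarrow> tangent C' (D j)"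
    and "\<forall>j k l. j \<noteq> i \<and> k \<noteq> i \<and> l \<noteq> i \<and> k \<noteq> l
            \<longrightarrow> tpt C' (D j) \<noteq> tpt (D k) (D l)"
    and "oriented_descartes (D(i := C'))"
  shows "W_mat (D(i := C')) = S_mat i ** W_mat D"
proof -
  define w where "w = (\<lambda>m. acc (D m))"
  have wfD: "wf_oc (D m)" for m using assms(1) unfolding oriented_descartes_def descartes_def by auto
  have G: "bil (w a) (w b) = (if a = b then 1 else -1)" for a b
    using od_bil[OF assms(1)] bil_self[OF wfD] unfolding w_def by auto
  have vv: "bil (acc C') (acc C') = 1" using bil_self[OF assms(2)] .
  have vj: "bil (acc C') (w j) = -1" if "j \<noteq> i" for j
    using od_bil[OF assms(6), of i j] that unfolding w_def by simp
  have ne: "acc C' \<noteq> w i"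
  proof
    assume "acc C' = w i"
    hence "C' = D i" using acc_inj[OF assms(2) wfD] unfolding w_def by blast
    thus False using assms(3) by simp
  qed
  have key: "acc C' = (\<Sum>m\<in>UNIV. (if m = i then -1 else 2) *\<^sub>R w m)"
    using lin[OF G vv vj ne] by blast
  show ?thesis
  proof (subst vec_eq_iff, intro allI, subst vec_eq_iff, intro allI)
    fix j k
    show "W_mat (D(i := C')) $ j $ k = (S_mat i ** W_mat D) $ j $ k"
    proof (cases "j = i")
      case True
      have "W_mat (D(i := C')) $ j $ k = acc C' $ k" using True by (simp add: W_mat_def)
      also have "\<dots> = (\<Sum>m\<in>UNIV. (if m = i then -1 else 2) * acc (D m) $ k)"
        unfolding key by (simp add: sum_component w_def)
      also have "\<dots> = (S_mat i ** W_mat D) $ j $ k"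
        using True by (simp add: S_mat_def W_mat_def matrix_matrix_mult_def)
      finally show ?thesis .
    next
      case False
      have "(S_mat i ** W_mat D) $ j $ k = (\<Sum>m\<in>UNIV. (if j = m then 1 else 0) * acc (D m) $ k)"
        using False unfolding matrix_matrix_mult_def by (simp add: S_mat_def W_mat_def)
      also have "\<dots> = (\<Sum>m\<in>UNIV. (if j = m then acc (D m) $ k else 0))"
        by (rule sum.cong) simp_all
      also have "\<dots> = acc (D j) $ k" by simp
      finally show ?thesis using False by (simp add: W_mat_def)
    qed
  qed
qed

end
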